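(* There is an absolute constant $c>0$ such that for every $\ell\ge 2$, every deterministic online algorithm for the soft allocation problem in dimension $\ell$ with all weights equal to $1$ has competitive ratio at least $c\,\ell$. That is, the competitive ratio of soft allocation is $\Omega(\ell)$.
   Context: Soft allocation problem in dimension $\ell$ with weights $w\in(0,\infty)^\ell$: an algorithm maintains $x(t)\in\Delta^{\ell-1}=\{x\in[0,1]^\ell:\sum_i x_i=1\}$ starting from some $x(0)$. At each time $t=1,2,\dots$ a direction $r_t\in\{1,\dots,\ell\}$ and a non-increasing function $f_t:[0,1]\to\mathbb{R}_{\ge0}\cup\{\infty\}$ are revealed; the algorithm moves from $x(t-1)$ to $x(t)$ knowing only data revealed so far, paying $\sum_i w_i|x_i(t)-x_i(t-1)|+f_t(x_{r_t}(t))$. An online algorithm is $\rho$-competitive if there is $b$ independent of the request sequence such that its total cost is at most $\rho\cdot\mathrm{OPT}+b$ on every sequence, where $\mathrm{OPT}$ is the optimal offline total cost. *)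

theory Defs
  imports Complex_Main "HOL-Library.Extended_Real"
begin

definition simplex :: "nat \<Rightarrow> (nat \<Rightarrow> real) set" where
  "simplex l = {x. (\<forall>i<l. 0 \<le> x i \<and> x i \<le> 1) \<and> (\<forall>i\<ge>l. x i = 0) \<and> (\<Sum>i<l. x i) = 1}"

text \<open>A request: a direction r and a cost function f : [0,1] -> [0,\<infinity>], non-increasing.\<close>
type_synonym request = "nat \<times> (real \<Rightarrow> ereal)"

definition valid_request :: "nat \<Rightarrow> request \<Rightarrow> bool" where
  "valid_request l q \<longleftrightarrow> fst q < l \<and>
     (\<forall>u\<in>{0..1}. 0 \<le> snd q u) \<and>
     (\<forall>u\<in>{0..1}. \<forall>v\<in>{0..1}. u \<le> v \<longrightarrow> snd q v \<le> snd q u)"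

definition valid_seq :: "nat \<Rightarrow> request list \<Rightarrow> bool" where
  "valid_seq l \<sigma> \<longleftrightarrow> (\<forall>q\<in>set \<sigma>. valid_request l q)"

definition traj_cost :: "nat \<Rightarrow> (nat \<Rightarrow> real) \<Rightarrow> request list \<Rightarrow> (nat \<Rightarrow> nat \<Rightarrow> real) \<Rightarrow> ereal" where
  "traj_cost l w \<sigma> y = (\<Sum>t<length \<sigma>.
      ereal (\<Sum>i<l. w i * \<bar>y (Suc t) i - y t i\<bar>) + snd (\<sigma> ! t) (y (Suc t) (fst (\<sigma> ! t))))"

text \<open>A deterministic online algorithm maps the requests revealed so far to the current
  point: x(t) = A (take t \<sigma>); in particular x(0) = A [].\<close>
definition online_alg :: "nat \<Rightarrow> (request list \<Rightarrow> nat \<Rightarrow> real) \<Rightarrow> bool" where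
  "online_alg l A \<longleftrightarrow> (\<forall>\<sigma>. valid_seq l \<sigma> \<longrightarrow> A \<sigma> \<in> simplex l)"

definition alg_cost :: "nat \<Rightarrow> (nat \<Rightarrow> real) \<Rightarrow> (request list \<Rightarrow> nat \<Rightarrow> real) \<Rightarrow> request list \<Rightarrow> ereal" where
  "alg_cost l w A \<sigma> = traj_cost l w \<sigma> (\<lambda>t. A (take t \<sigma>))"

definition opt_cost :: "nat \<Rightarrow> (nat \<Rightarrow> real) \<Rightarrow> (nat \<Rightarrow> real) \<Rightarrow> request list \<Rightarrow> ereal" where
  "opt_cost l w x0 \<sigma> = (INF y\<in>{y. y 0 = x0 \<and> (\<forall>t. y t \<in> simplex l)}. traj_cost l w \<sigma> y)"

definition competitive :: "nat \<Rightarrow> (nat \<Rightarrow> real) \<Rightarrow> (request list \<Rightarrow> nat \<Rightarrow> real) \<Rightarrow> real \<Rightarrow> bool" where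
  "competitive l w A \<rho> \<longleftrightarrow> (\<exists>b::real. \<forall>\<sigma>. valid_seq l \<sigma> \<longrightarrow>
      alg_cost l w A \<sigma> \<le> ereal \<rho> * opt_cost l w (A []) \<sigma> + ereal b)"

end

theory Submission
  imports Defs
begin

definition fcost :: "nat \<Rightarrow> real \<Rightarrow> ereal" where
  "fcost l u = (if u < 1/(real l - 1) then ereal (1/(real l*(real l - 1))) else 0)"

definition dir :: "nat \<Rightarrow> (nat\<Rightarrow>real) \<Rightarrow> nat" where
  "dir l x = (SOME i. i<l \<and> (\<forall>j<l. x i \<le> x j))"

primrec adv :: "nat \<Rightarrow> (request list \<Rightarrow> nat \<Rightarrow> real) \<Rightarrow> nat \<Rightarrow> request list" where
  "adv l A 0 = []"
| "adv l A (Suc n) = adv l A n @ [(dir l (A (adv l A n)), fcost l)]"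

lemma adv_len[simp]: "length (adv l A n) = n"
  by (induction n) auto

lemma adv_take: "m \<le> n \<Longrightarrow> take m (adv l A n) = adv l A m"
proof (induction n)
  case 0 then show ?case by simp
next
  case (Suc n)
  show ?case
  proof (cases "m = Suc n")
    case True then show ?thesis by (metis adv_len order_refl take_all)
  next
    case False
    then have "m \<le> n" using Suc.prems by simp
    then show ?thesis using Suc.IH by simp
  qed
qed

lemma adv_nth: "t < n \<Longrightarrow> adv l A n ! t = (dir l (A (adv l A t)), fcost l)"
proof -
  assume "t < n"
  then have "adv l A n ! t = take (Suc t) (adv l A n) ! t" by simp
  also have "\<dots> = adv l A (Suc t) ! t" using \<open>t<n\<close> by (simp add: adv_take)
  also have "\<dots> = (dir l (A (adv l A t)), fcost l)" by (simp add: nth_append)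
  finally show ?thesis .
qed

lemma ex_min: "(l::nat) > 0 \<Longrightarrow> \<exists>i<l. \<forall>j<l. (x::nat\<Rightarrow>real) i \<le> x j"
proof (induction l)
  case 0 then show ?case by simp
next
  case (Suc l)
  show ?case
  proof (cases "l = 0")
    case True then show ?thesis by auto
  next
    case False
    then obtain i where i: "i<l" "\<forall>j<l. x i \<le> x j" using Suc.IH by auto
    show ?thesis
    proof (cases "x i \<le> x l")
      case True then show ?thesis using i by (metis less_Suc_eq less_SucI)
    next
      case False then show ?thesis using i
        by (metis less_Suc_eq linorder_not_le order_less_imp_le lessI order.trans)
    qed
  qed
qed

lemma dir_prop: "l > 0 \<Longrightarrow> dir l x < l \<and> (\<forall>j<l. x (dir l x) \<le> x j)"
  unfolding dir_def using someI_ex[OF ex_min] by blast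

lemma dir_small:
  assumes "l > 0" "x \<in> simplex l"
  shows "real l * x (dir l x) \<le> 1"
proof -
  have "(\<Sum>i<l. x (dir l x)) \<le> (\<Sum>i<l. x i)"
    by (rule sum_mono) (use dir_prop[OF assms(1)] in auto)
  then show ?thesis using assms(2) by (simp add: simplex_def)
qed

lemma fcost_valid: "l \<ge> 2 \<Longrightarrow> r < l \<Longrightarrow> valid_request l (r, fcost l)"
  unfolding valid_request_def fcost_def by auto

lemma adv_valid: "l \<ge> 2 \<Longrightarrow> valid_seq l (adv l A n)"
  by (induction n) (auto simp: valid_seq_def intro!: fcost_valid dir_prop[THEN conjunct1])

lemma step_ge:
  assumes l: "l \<ge> 2" and x: "x \<in> simplex l" and x': "x' \<in> simplex l"
  shows "ereal (1/(real l*(real l - 1))) \<le>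
         ereal (\<Sum>i<l. 1 * \<bar>x' i - x i\<bar>) + fcost l (x' (dir l x))"
proof -
  let ?r = "dir l x"
  have r: "?r < l" using dir_prop l by auto
  have small: "real l * x ?r \<le> 1" using dir_small l x by auto
  have nn: "0 \<le> (\<Sum>i<l. 1 * \<bar>x' i - x i\<bar>)" by (simp add: sum_nonneg)
  show ?thesis
  proof (cases "x' ?r < 1/(real l - 1)")
    case True
    have "fcost l (x' ?r) = ereal (1/(real l*(real l - 1)))" unfolding fcost_def by (rule if_P[OF True])
    moreover have "ereal 0 \<le> ereal (\<Sum>i<l. 1 * \<bar>x' i - x i\<bar>)" using nn by simp
    ultimately show ?thesis by (metis add.left_neutral add_mono order_refl zero_ereal_def)
  next
    case False
    have lpos: "real l - 1 > 0" "real l > 0" using l by auto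
    have "x ?r \<le> 1 / real l" using small lpos by (simp add: field_simps)
    moreover have "1/(real l - 1) - 1/real l = 1/(real l*(real l - 1))"
      using lpos by (simp add: field_simps)
    ultimately have "1/(real l*(real l - 1)) \<le> \<bar>x' ?r - x ?r\<bar>" using False by linarith
    also have "\<dots> \<le> (\<Sum>i<l. 1 * \<bar>x' i - x i\<bar>)"
      using member_le_sum[of ?r "{..<l}" "\<lambda>i. 1 * \<bar>x' i - x i\<bar>"] r by simp
    finally have "ereal (1/(real l*(real l - 1))) \<le> ereal (\<Sum>i<l. 1 * \<bar>x' i - x i\<bar>)" by simp
    moreover have "0 \<le> fcost l (x' ?r)" unfolding fcost_def using lpos by simp
    ultimately show ?thesis by (metis add.right_neutral add_mono)
  qed
qed

lemma alg_ge:
  assumes l: "l \<ge> 2" and A: "online_alg l A"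
  shows "ereal (real T * (1/(real l*(real l - 1)))) \<le> alg_cost l (\<lambda>_. 1) A (adv l A T)"
proof -
  have "ereal (real T * (1/(real l*(real l - 1)))) = (\<Sum>t<T. ereal (1/(real l*(real l - 1))))"
    by (simp add: sum_ereal[symmetric])
  also have "\<dots> \<le> alg_cost l (\<lambda>_. 1) A (adv l A T)"
    unfolding alg_cost_def traj_cost_def adv_len
  proof (rule sum_mono)
    fix t assume "t \<in> {..<T}"
    then have t: "t < T" by simp
    have e1: "take t (adv l A T) = adv l A t" using t by (simp add: adv_take)
    have e2: "take (Suc t) (adv l A T) = adv l A (Suc t)" using t by (simp add: adv_take)
    have x: "A (adv l A t) \<in> simplex l" using A adv_valid[OF l, of A t] unfolding online_alg_def by blast
    have x': "A (adv l A (Suc t)) \<in> simplex l" using A adv_valid[OF l, of A "Suc t"] unfolding online_alg_def by blast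
    show "ereal (1/(real l*(real l - 1))) \<le>
      ereal (\<Sum>i<l. 1 * \<bar>A (take (Suc t) (adv l A T)) i - A (take t (adv l A T)) i\<bar>) +
      snd (adv l A T ! t) (A (take (Suc t) (adv l A T)) (fst (adv l A T ! t)))"
      unfolding e1 e2 adv_nth[OF t] using step_ge[OF l x x'] by simp
  qed
  finally show ?thesis .
qed

lemma traj_nonneg:
  assumes "valid_seq l \<sigma>" "\<forall>t. y t \<in> simplex l"
  shows "0 \<le> traj_cost l (\<lambda>_. 1) \<sigma> y"
  unfolding traj_cost_def
proof (rule sum_nonneg)
  fix t assume "t \<in> {..<length \<sigma>}"
  then have q: "valid_request l (\<sigma> ! t)" using assms(1) by (auto simp: valid_seq_def)
  then have "fst (\<sigma> ! t) < l" by (simp add: valid_request_def)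
  then have "y (Suc t) (fst (\<sigma> ! t)) \<in> {0..1}" using assms(2) by (auto simp: simplex_def)
  then have "0 \<le> snd (\<sigma> ! t) (y (Suc t) (fst (\<sigma> ! t)))" using q by (simp add: valid_request_def)
  moreover have "0 \<le> ereal (\<Sum>i<l. 1 * \<bar>y (Suc t) i - y t i\<bar>)" by (simp add: sum_nonneg)
  ultimately show "0 \<le> ereal (\<Sum>i<l. 1 * \<bar>y (Suc t) i - y t i\<bar>) + snd (\<sigma> ! t) (y (Suc t) (fst (\<sigma> ! t)))"
    by simp
qed

lemma count_pigeon:
  fixes r :: "nat \<Rightarrow> nat"
  assumes l: "l > 0" and r: "\<forall>t<T. r t < l"
  shows "\<exists>j<l. real l * (\<Sum>t<T. if r t = j then 1 else 0) \<le> real T"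
proof (rule ccontr)
  assume "\<not> ?thesis"
  then have h: "\<forall>j\<in>{..<l}. real T / real l < (\<Sum>t<T. if r t = j then 1 else 0)"
    using l by (auto simp: field_simps)
  have "(\<Sum>j<l. real T / real l) < (\<Sum>j<l. (\<Sum>t<T. if r t = j then 1 else (0::real)))"
    by (rule sum_strict_mono) (use h l in auto)
  also have "\<dots> = (\<Sum>t<T. (\<Sum>j<l. if r t = j then 1 else (0::real)))"
    by (rule sum.swap)
  also have "\<dots> = (\<Sum>t<T. 1)"
    by (rule sum.cong) (use r in auto)
  finally show False using l by simp
qed

lemma z_simplex:
  assumes l: "l \<ge> 2" and j: "j < l"
  shows "(\<lambda>i. if i<l \<and> i\<noteq>j then 1/(real l - 1) else 0) \<in> simplex l"
proof -
  have lp: "real l - 1 > 0" using l by simp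
  have "(\<Sum>i<l. if i<l \<and> i\<noteq>j then 1/(real l - 1) else 0)
        = (\<Sum>i\<in>{..<l}-{j}. 1/(real l - 1))"
    by (rule sum.mono_neutral_cong_right) auto
  also have "\<dots> = (real l - 1) * (1/(real l - 1))"
    using j l by (simp add: card_Diff_singleton of_nat_diff)
  also have "\<dots> = 1" using lp by simp
  finally show ?thesis unfolding simplex_def using lp by auto
qed

lemma move_le2:
  assumes "x \<in> simplex l" "z \<in> simplex l"
  shows "(\<Sum>i<l. 1 * \<bar>z i - x i\<bar>) \<le> 2"
proof -
  have "(\<Sum>i<l. 1 * \<bar>z i - x i\<bar>) \<le> (\<Sum>i<l. z i + x i)"
  proof (rule sum_mono)
    fix i assume "i \<in> {..<l}"
    then have "0 \<le> z i" "0 \<le> x i" using assms by (auto simp: simplex_def)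
    then show "1 * \<bar>z i - x i\<bar> \<le> z i + x i" by (simp add: abs_le_iff)
  qed
  also have "\<dots> = 2" using assms by (simp add: sum.distrib simplex_def)
  finally show ?thesis .
qed

lemma opt_le:
  assumes l: "l \<ge> 2" and A: "online_alg l A"
  shows "\<exists>v. opt_cost l (\<lambda>_. 1) (A []) (adv l A T) = ereal v \<and> 0 \<le> v \<and>
            real l * v \<le> 2 * real l + real T * (1/(real l*(real l - 1)))"
proof -
  define e where "e = 1/(real l*(real l - 1))"
  define r where "r t = dir l (A (adv l A t))" for t
  have lp: "real l - 1 > 0" "real l > 0" using l by auto
  have rl: "\<forall>t<T. r t < l" using dir_prop l unfolding r_def by auto
  obtain j where j: "j < l" and jc: "real l * (\<Sum>t<T. if r t = j then 1 else 0) \<le> real T"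
    using count_pigeon[OF _ rl] l by auto
  define cnt where "cnt = (\<Sum>t<T. if r t = j then 1 else (0::real))"
  define z where "z = (\<lambda>i. if i<l \<and> i\<noteq>j then 1/(real l - 1) else (0::real))"
  define y :: "nat \<Rightarrow> nat \<Rightarrow> real" where "y t = (if t = 0 then A [] else z)" for t
  have x0: "A [] \<in> simplex l" using A by (simp add: online_alg_def valid_seq_def)
  have zs: "z \<in> simplex l" unfolding z_def using z_simplex[OF l j] .
  have ys: "\<forall>t. y t \<in> simplex l" using x0 zs by (simp add: y_def)
  have term_le: "ereal (\<Sum>i<l. 1 * \<bar>y (Suc t) i - y t i\<bar>) +
      snd (adv l A T ! t) (y (Suc t) (fst (adv l A T ! t)))
      \<le> ereal ((if t = 0 then 2 else 0) + (if r t = j then e else 0))" if t: "t < T" for t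
  proof -
    have nth: "adv l A T ! t = (r t, fcost l)" using adv_nth[OF t] by (simp add: r_def)
    have f: "fcost l (z (r t)) = ereal (if r t = j then e else 0)"
    proof (cases "r t = j")
      case True
      then have "z (r t) < 1/(real l - 1)" using lp by (simp add: z_def)
      then show ?thesis unfolding fcost_def e_def using True by simp
    next
      case False
      then have "z (r t) = 1/(real l - 1)" using rl t by (simp add: z_def)
      then show ?thesis unfolding fcost_def e_def using False by simp
    qed
    have m: "(\<Sum>i<l. 1 * \<bar>y (Suc t) i - y t i\<bar>) \<le> (if t = 0 then 2 else 0)"
    proof (cases "t = 0")
      case True then show ?thesis using move_le2[OF x0 zs] by (simp add: y_def)
    next
      case False then show ?thesis by (simp add: y_def)
    qed
    have "ereal (\<Sum>i<l. 1 * \<bar>y (Suc t) i - y t i\<bar>) + snd (adv l A T ! t) (y (Suc t) (fst (adv l A T ! t)))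
       = ereal ((\<Sum>i<l. 1 * \<bar>y (Suc t) i - y t i\<bar>) + (if r t = j then e else 0))"
      unfolding nth using f by (simp add: y_def)
    also have "\<dots> \<le> ereal ((if t = 0 then 2 else 0) + (if r t = j then e else 0))"
      using m by simp
    finally show ?thesis .
  qed
  have tc: "traj_cost l (\<lambda>_. 1) (adv l A T) y \<le> ereal (2 + e * cnt)"
  proof -
    have "traj_cost l (\<lambda>_. 1) (adv l A T) y \<le>
        (\<Sum>t<T. ereal ((if t = 0 then 2 else 0) + (if r t = j then e else 0)))"
      unfolding traj_cost_def adv_len by (rule sum_mono) (use term_le in auto)
    also have "\<dots> = ereal (\<Sum>t<T. (if t = 0 then 2 else 0) + (if r t = j then e else 0))"
      by (simp add: sum_ereal)
    also have "(\<Sum>t<T. (if t = 0 then 2 else 0) + (if r t = j then e else 0)) =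
        (\<Sum>t<T. (if t = 0 then 2 else (0::real))) + e * cnt"
      unfolding cnt_def sum.distrib sum_distrib_left by (rule arg_cong2[where f="(+)"]) (auto intro: sum.cong)
    also have "(\<Sum>t<T. (if t = 0 then 2 else (0::real))) \<le> 2"
    proof (cases T)
      case 0 then show ?thesis by simp
    next
      case (Suc n) then show ?thesis by (simp add: sum.delta)
    qed
    finally show ?thesis by simp
  qed
  let ?S = "{y. y 0 = A [] \<and> (\<forall>t. y t \<in> simplex l)}"
  have yin: "y \<in> ?S" using ys by (simp add: y_def)
  have ub: "opt_cost l (\<lambda>_. 1) (A []) (adv l A T) \<le> ereal (2 + e * cnt)"
    unfolding opt_cost_def using INF_lower[OF yin, of "traj_cost l (\<lambda>_. 1) (adv l A T)"] tc
    by (meson order_trans)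
  have lb: "0 \<le> opt_cost l (\<lambda>_. 1) (A []) (adv l A T)"
    unfolding opt_cost_def
    by (rule INF_greatest) (use traj_nonneg adv_valid[OF l] in auto)
  obtain v where vv: "opt_cost l (\<lambda>_. 1) (A []) (adv l A T) = ereal v"
    using ub lb by (cases "opt_cost l (\<lambda>_. 1) (A []) (adv l A T)") auto
  have v1: "0 \<le> v" "v \<le> 2 + e * cnt" using ub lb vv by auto
  have "real l * v \<le> real l * (2 + e * cnt)" using v1 lp by (simp add: mult_left_mono)
  also have "\<dots> = 2 * real l + e * (real l * cnt)" by (simp add: algebra_simps)
  also have "\<dots> \<le> 2 * real l + e * real T"
  proof -
    have "0 \<le> e" using lp unfolding e_def by simp
    then have "e * (real l * cnt) \<le> e * real T" using jc unfolding cnt_def by (simp add: mult_left_mono)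
    then show ?thesis by simp
  qed
  finally show ?thesis using vv v1 unfolding e_def by (auto simp: mult.commute)
qed

lemma final_arith:
  fixes P Q L b :: real
  shows "P \<le> L + Q / 2 \<Longrightarrow> b \<le> B \<Longrightarrow> Q \<le> P + b \<Longrightarrow> 2 * (L + B) < Q \<Longrightarrow> False"
  by (smt (verit) field_sum_of_halves)

theorem proposition1:
  shows "\<exists>c::real. c > 0 \<and> (\<forall>l::nat. l \<ge> 2 \<longrightarrow>
     (\<forall>A \<rho>. online_alg l A \<and> competitive l (\<lambda>_. 1) A \<rho> \<longrightarrow> \<rho> \<ge> c * real l))"
proof (intro exI[of _ "1/2"] conjI allI impI)
  fix l :: nat and A \<rho>
  assume l: "l \<ge> 2" and h: "online_alg l A \<and> competitive l (\<lambda>_. 1) A \<rho>"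
  then have A: "online_alg l A" by simp
  obtain b where b: "\<forall>\<sigma>. valid_seq l \<sigma> \<longrightarrow>
      alg_cost l (\<lambda>_. 1) A \<sigma> \<le> ereal \<rho> * opt_cost l (\<lambda>_. 1) (A []) \<sigma> + ereal b"
    using h by (auto simp: competitive_def)
  define e where "e = 1/(real l*(real l - 1))"
  have lp: "real l - 1 > 0" "real l > 0" using l by auto
  have ep: "e > 0" using lp unfolding e_def by simp
  show "1/2 * real l \<le> \<rho>"
  proof (rule ccontr)
    assume nr: "\<not> 1/2 * real l \<le> \<rho>"
    define T where "T = nat \<lceil>2 * (real l + \<bar>b\<bar>) / e\<rceil> + 1"
    have "2 * (real l + \<bar>b\<bar>) / e < real T" unfolding T_def by linarith
    then have Tbig: "2 * (real l + \<bar>b\<bar>) < real T * e" using ep by (simp add: field_simps)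
    obtain v where vv: "opt_cost l (\<lambda>_. 1) (A []) (adv l A T) = ereal v" and v0: "0 \<le> v"
      and vle: "real l * v \<le> 2 * real l + real T * e"
      using opt_le[OF l A, of T] unfolding e_def by blast
    have "ereal (real T * e) \<le> alg_cost l (\<lambda>_. 1) A (adv l A T)"
      using alg_ge[OF l A, of T] unfolding e_def .
    also have "\<dots> \<le> ereal (\<rho> * v + b)"
      using b adv_valid[OF l, of A T] vv by auto
    finally have ineq: "real T * e \<le> \<rho> * v + b" by simp
    have "\<rho> * v \<le> real l + real T * e / 2"
    proof (cases "\<rho> \<ge> 0")
      case True
      then have "\<rho> * v \<le> (1/2 * real l) * v" using nr v0 by (intro mult_right_mono) auto
      also have "\<dots> \<le> real l + real T * e / 2" using vle by simp
      finally show ?thesis .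
    next
      case False
      then have "\<rho> * v \<le> 0" using v0 by (simp add: mult_nonpos_nonneg)
      moreover have "0 \<le> real T * e" using ep by simp
      ultimately show ?thesis using lp by linarith
    qed
    moreover have "b \<le> \<bar>b\<bar>" by simp
    ultimately show False using ineq Tbig final_arith by blast
  qed
qed simp

end
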